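(* Let $(\Omega,\mathcal F,\Pr)$ be a probability space with filtration $\{\mathcal F_n\}_{n\ge0}$, let $\alpha>0$, $\xi>0$, and let $\{T_n\}_{n\ge0}\subset(0,1)$ be strictly decreasing and deterministic with $\sum_nT_n=\infty$, $\sum_nT_n^2<\infty$. Let $\{z_n\}$ be non-negative and adapted with $\mathbb{E}[z_{n+1}\mid\mathcal F_n]\le(1-\alpha T_n)z_n+\xi T_n$ a.s., and suppose there is a constant $B_1\ge\alpha$ with $|z_{n+1}-z_n|\le B_1T_n(z_n+1)$ a.s. for all $n$. Assume in addition that there is a constant $\eta>0$ with (A1) $\liminf_{n\to\infty} nT_n>\frac{\eta}{2\alpha}$; and (A2) $\sum_n (n+1)^\eta T_n^2<\infty$. Then $$\lim_{n\to\infty} n^{\eta/2}\, d\big(z_n,[0,\xi/\alpha]\big)=0\quad\text{a.s.}$$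
   Context: For $z\in\mathbb R$ and an interval $Z\subset\mathbb R$, $d(z,Z)\doteq\inf_{\tilde z\in Z}|z-\tilde z|$. *)

theory Defs
  imports "HOL-Probability.Probability"
begin

end

theory Submission
  imports Defs
begin

lemma partial_sums_unbounded:
  fixes T :: "nat \<Rightarrow> real"
  assumes "\<And>n. 0 \<le> T n" "\<not> summable T"
  shows "\<exists>n0. \<forall>n\<ge>n0. S \<le> (\<Sum>j<n. T j)"
proof (rule ccontr)
  assume "\<not> ?thesis"
  then have h: "\<And>n0. \<exists>n\<ge>n0. (\<Sum>j<n. T j) < S" by (auto simp: not_le)
  have bnd: "\<And>n. (\<Sum>j<n. T j) \<le> S"
  proof -
    fix n
    obtain m where m: "m \<ge> n" "(\<Sum>j<m. T j) < S" using h by blast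
    have "(\<Sum>j<n. T j) \<le> (\<Sum>j<m. T j)"
      by (rule sum_mono2) (use m assms in auto)
    then show "(\<Sum>j<n. T j) \<le> S" using m by simp
  qed
  have "summable T" using summableI_nonneg_bounded[OF assms(1) bnd] .
  then show False using assms by simp
qed

lemma det_conv:
  fixes a f T :: "nat \<Rightarrow> real" and \<epsilon> :: real
  assumes rec: "\<And>n. n \<ge> N \<Longrightarrow> a (Suc n) \<le> exp (- \<epsilon> * T n) * a n + f n"
    and fnn: "\<And>n. 0 \<le> f n" and fs: "summable f"
    and Tpos: "\<And>n. 0 \<le> T n" and Tns: "\<not> summable T" and eps: "\<epsilon> > 0"
    and ann: "\<And>n. n \<ge> N \<Longrightarrow> 0 \<le> a n"
  shows "a \<longlonglongrightarrow> 0"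
proof -
  have bound: "a (k+n) \<le> exp (- \<epsilon> * (\<Sum>j<n. T (k+j))) * a k + (\<Sum>j<n. f (k+j))"
    if "k \<ge> N" for k n
  proof (induction n)
    case 0 then show ?case by simp
  next
    case (Suc n)
    let ?S = "(\<Sum>j<n. T (k+j))" and ?F = "(\<Sum>j<n. f (k+j))"
    have "a (k + Suc n) \<le> exp (- \<epsilon> * T (k+n)) * a (k+n) + f (k+n)"
      using rec[of "k+n"] that by simp
    also have "\<dots> \<le> exp (- \<epsilon> * T (k+n)) * (exp (- \<epsilon> * ?S) * a k + ?F) + f (k+n)"
      using Suc by (intro add_right_mono mult_left_mono) auto
    also have "\<dots> = exp (- \<epsilon> * (?S + T (k+n))) * a k + exp (- \<epsilon> * T (k+n)) * ?F + f (k+n)"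
      by (simp add: algebra_simps exp_add[symmetric])
    also have "\<dots> \<le> exp (- \<epsilon> * (?S + T (k+n))) * a k + ?F + f (k+n)"
    proof -
      have "exp (- \<epsilon> * T (k+n)) \<le> 1" using eps Tpos[of "k+n"] by simp
      moreover have "?F \<ge> 0" using fnn by (simp add: sum_nonneg)
      ultimately show ?thesis by (simp add: mult_left_le_one_le)
    qed
    finally show ?case by (simp add: add.assoc)
  qed
  have tail_le: "(\<Sum>j<n. f (k+j)) \<le> (\<Sum>j. f (j+k))" for k n
    using sum_le_suminf[of "\<lambda>j. f (j+k)" "{..<n}"] fs fnn
    by (simp add: summable_iff_shift add.commute)
  define A where "A = a N + suminf f"
  have aN: "a k \<le> A" if "k \<ge> N" for k
  proof -
    define n where "n = k - N"
    have k: "k = N + n" using that by (simp add: n_def)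
    have "a k \<le> exp (- \<epsilon> * (\<Sum>j<n. T (N+j))) * a N + (\<Sum>j<n. f (N+j))"
      using bound[of N n] k by simp
    also have "\<dots> \<le> 1 * a N + suminf f"
    proof (intro add_mono mult_right_mono)
      show "exp (- \<epsilon> * (\<Sum>j<n. T (N+j))) \<le> 1" using eps Tpos by (simp add: sum_nonneg)
      show "0 \<le> a N" using ann by simp
      show "(\<Sum>j<n. f (N+j)) \<le> suminf f"
      proof -
        have "(\<Sum>j<n. f (N+j)) \<le> (\<Sum>j. f (j+N))" by (rule tail_le)
        also have "\<dots> \<le> suminf f"
          using suminf_split_initial_segment[OF fs, of N] sum_nonneg[of "{..<N}" f] fnn by simp
        finally show ?thesis .
      qed
    qed
    finally show ?thesis by (simp add: A_def)
  qed
  have A0: "A \<ge> 0" using aN[of N] ann[of N] by simp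
  show ?thesis
  proof (rule LIMSEQ_I)
    fix r :: real assume r: "r > 0"
    obtain k0 where k0: "\<forall>n\<ge>k0. norm (\<Sum>i. f (i + n)) < r/2"
      using suminf_exist_split[of "r/2" f] r fs by auto
    define k where "k = max k0 N"
    have tk0: "norm (\<Sum>i. f (i + k)) < r/2" using k0 by (simp add: k_def)
    have tk: "(\<Sum>i. f (i + k)) < r/2" using tk0 by (simp add: abs_less_iff)
    have Tk: "\<not> summable (\<lambda>j. T (k+j))"
      using Tns summable_iff_shift[of T k] by (simp add: add.commute)
    define S where "S = ln ((A + 1) * 2 / r) / \<epsilon>"
    obtain n0 where n0: "\<forall>n\<ge>n0. S \<le> (\<Sum>j<n. T (k+j))"
      using partial_sums_unbounded[OF _ Tk, of S] Tpos by auto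
    show "\<exists>no. \<forall>n\<ge>no. norm (a n - 0) < r"
    proof (intro exI allI impI)
      fix n assume n: "n \<ge> k + n0"
      define m where "m = n - k"
      have m: "n = k + m" "m \<ge> n0" using n by (auto simp: m_def)
      have kN: "k \<ge> N" by (simp add: k_def)
      have e1: "exp (- \<epsilon> * (\<Sum>j<m. T (k+j))) \<le> exp (- \<epsilon> * S)"
        using n0 m eps by simp
      have e2: "exp (- \<epsilon> * S) = r / ((A+1)*2)"
        using eps r A0 by (simp add: S_def exp_minus exp_ln)
      have "a n \<le> exp (- \<epsilon> * (\<Sum>j<m. T (k+j))) * a k + (\<Sum>j<m. f (k+j))"
        using bound[OF kN, of m] m by simp
      also have "\<dots> \<le> (r / ((A+1)*2)) * A + (\<Sum>j. f (j+k))"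
      proof (rule add_mono)
        have e3: "exp (- \<epsilon> * (\<Sum>j<m. T (k+j))) \<le> r / ((A+1)*2)" using e1 by (simp only: e2)
        have pos: "0 \<le> r / ((A+1)*2)" using r A0 by simp
        show "exp (- \<epsilon> * (\<Sum>j<m. T (k+j))) * a k \<le> (r / ((A+1)*2)) * A"
          by (rule mult_mono[OF e3 aN[OF kN] pos ann[OF kN]])
        show "(\<Sum>j<m. f (k+j)) \<le> (\<Sum>j. f (j+k))" by (rule tail_le)
      qed
      also have "\<dots> < r/2 + r/2"
      proof -
        have "(r / ((A+1)*2)) * A < r/2" using A0 r by (simp add: field_simps)
        then show ?thesis using tk by linarith
      qed
      finally have "a n < r" by simp
      moreover have "a n \<ge> 0" using ann[of n] kN n by simp
      ultimately show "norm (a n - 0) < r" by simp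
    qed
  qed
qed

lemma maximal_fin:
  fixes M :: "'a measure" and F :: "nat \<Rightarrow> 'a measure" and U :: "nat \<Rightarrow> 'a \<Rightarrow> real"
  assumes sub: "\<And>n. subalgebra M (F n)"
    and mono: "\<And>n m. n \<le> m \<Longrightarrow> sets (F n) \<subseteq> sets (F m)"
    and Umeas: "\<And>n. U n \<in> borel_measurable (F n)"
    and Unn: "\<And>n x. x \<in> space M \<Longrightarrow> 0 \<le> U n x"
    and sup: "\<And>n B. n \<ge> N \<Longrightarrow> B \<in> sets (F n) \<Longrightarrow>
       (\<integral>\<^sup>+x\<in>B. ennreal (U (Suc n) x) \<partial>M) \<le> (\<integral>\<^sup>+x\<in>B. ennreal (U n x) \<partial>M)"
  shows "\<forall>k B. k \<ge> N \<longrightarrow> B \<in> sets (F k) \<longrightarrow> ennreal lam * emeasure M (B \<inter> {x\<in>space M. \<exists>j. k \<le> j \<and> j \<le> k + d \<and> lam \<le> U j x})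
       \<le> (\<integral>\<^sup>+x\<in>B. ennreal (U k x) \<partial>M)"
proof (induction d)
  have subM: "\<And>n. sets (F n) \<subseteq> sets M" and spF: "\<And>n. space (F n) = space M"
    using sub by (auto simp: subalgebra_def)
  have UM: "\<And>n. U n \<in> borel_measurable M"
    using Umeas sub measurable_from_subalg by blast
  {
    case 0
    show ?case
    proof (intro allI impI)
      fix k B assume k: "k \<ge> N" and B: "B \<in> sets (F k)"
      have BM: "B \<in> sets M" using B subM by blast
      let ?S = "B \<inter> {x\<in>space M. \<exists>j. k \<le> j \<and> j \<le> k + 0 \<and> lam \<le> U j x}"
      have S: "?S = B \<inter> {x\<in>space M. lam \<le> U k x}" by auto
      have [measurable]: "U k \<in> borel_measurable M" "B \<in> sets M" using UM BM by auto
      have SM: "?S \<in> sets M" unfolding S by measurable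
      have "ennreal lam * emeasure M ?S = (\<integral>\<^sup>+x. ennreal lam * indicator ?S x \<partial>M)"
        by (rule nn_integral_cmult_indicator[OF SM, symmetric])
      also have "\<dots> \<le> (\<integral>\<^sup>+x\<in>B. ennreal (U k x) \<partial>M)"
      proof (intro nn_integral_mono)
        fix x show "ennreal lam * indicator ?S x \<le> ennreal (U k x) * indicator B x"
          unfolding S by (cases "x \<in> B \<inter> {x\<in>space M. lam \<le> U k x}") (auto simp: ennreal_leI)
      qed
      finally show "ennreal lam * emeasure M ?S \<le> (\<integral>\<^sup>+x\<in>B. ennreal (U k x) \<partial>M)" .
    qed
  next
    case (Suc d)
    show ?case
    proof (intro allI impI)
      fix k B assume k: "k \<ge> N" and B: "B \<in> sets (F k)"
      have BM: "B \<in> sets M" using B subM by blast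
      define S where "S = B \<inter> {x\<in>space M. lam \<le> U k x}"
      define B' where "B' = B \<inter> {x\<in>space M. U k x < lam}"
      have [measurable]: "U k \<in> borel_measurable (F k)" by (rule Umeas)
      have m1: "{x\<in>space (F k). lam \<le> U k x} \<in> sets (F k)" by measurable
      have m2: "{x\<in>space (F k). U k x < lam} \<in> sets (F k)" by measurable
      have SF: "S \<in> sets (F k)" unfolding S_def using B m1 spF[of k] by auto
      have B'F: "B' \<in> sets (F k)" unfolding B'_def using B m2 spF[of k] by auto
      have B'F1: "B' \<in> sets (F (Suc k))" using B'F mono[of k "Suc k"] by auto
      have SM: "S \<in> sets M" and B'M: "B' \<in> sets M" using SF B'F subM by blast+
      let ?E = "\<lambda>k d. {x\<in>space M. \<exists>j. k \<le> j \<and> j \<le> k + d \<and> lam \<le> U j x}"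
      have Eeq: "?E (Suc k) d = (\<Union>j\<in>{Suc k..Suc k+d}. {x\<in>space M. lam \<le> U j x})" by auto
      have "(\<Union>j\<in>{Suc k..Suc k+d}. {x\<in>space M. lam \<le> U j x}) \<in> sets M"
      proof (rule sets.finite_UN)
        fix j
        have [measurable]: "U j \<in> borel_measurable M" by (rule UM)
        show "{x\<in>space M. lam \<le> U j x} \<in> sets M" by measurable
      qed simp
      then have E1M: "B' \<inter> ?E (Suc k) d \<in> sets M" using B'M Eeq by auto
      have split: "B \<inter> ?E k (Suc d) = S \<union> (B' \<inter> ?E (Suc k) d)"
      proof (intro set_eqI iffI)
        fix x assume "x \<in> B \<inter> ?E k (Suc d)"
        then obtain j where j: "x\<in>B" "x\<in>space M" "k\<le>j" "j \<le> k + Suc d" "lam \<le> U j x" by auto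
        show "x \<in> S \<union> (B' \<inter> ?E (Suc k) d)"
        proof (cases "lam \<le> U k x")
          case True then show ?thesis using j unfolding S_def by auto
        next
          case False
          then have "j \<noteq> k" using j by auto
          then have "Suc k \<le> j" "j \<le> Suc k + d" using j by auto
          then show ?thesis using j False unfolding B'_def by auto
        qed
      next
        fix x assume x: "x \<in> S \<union> (B' \<inter> ?E (Suc k) d)"
        show "x \<in> B \<inter> ?E k (Suc d)"
        proof (cases "x \<in> S")
          case True then show ?thesis unfolding S_def by auto
        next
          case False
          then obtain j where "x \<in> B" "x\<in>space M" "Suc k \<le> j" "j \<le> Suc k + d" "lam \<le> U j x"
            using x unfolding B'_def by auto
          then show ?thesis by (intro IntI CollectI conjI exI[of _ j]) auto
        qed
      qed
      have disj: "S \<inter> (B' \<inter> ?E (Suc k) d) = {}" unfolding S_def B'_def by auto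
      have "ennreal lam * emeasure M (B \<inter> ?E k (Suc d))
          = ennreal lam * emeasure M S + ennreal lam * emeasure M (B' \<inter> ?E (Suc k) d)"
        unfolding split plus_emeasure[OF SM E1M disj, symmetric] by (simp add: distrib_left)
      also have "\<dots> \<le> (\<integral>\<^sup>+x\<in>S. ennreal (U k x) \<partial>M) + (\<integral>\<^sup>+x\<in>B'. ennreal (U (Suc k) x) \<partial>M)"
      proof (rule add_mono)
        have "ennreal lam * emeasure M S = (\<integral>\<^sup>+x. ennreal lam * indicator S x \<partial>M)"
          by (rule nn_integral_cmult_indicator[OF SM, symmetric])
        also have "\<dots> \<le> (\<integral>\<^sup>+x\<in>S. ennreal (U k x) \<partial>M)"
        proof (intro nn_integral_mono)
          fix x show "ennreal lam * indicator S x \<le> ennreal (U k x) * indicator S x"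
            unfolding S_def by (cases "x \<in> B \<inter> {x\<in>space M. lam \<le> U k x}") (auto simp: ennreal_leI)
        qed
        finally show "ennreal lam * emeasure M S \<le> (\<integral>\<^sup>+x\<in>S. ennreal (U k x) \<partial>M)" .
        show "ennreal lam * emeasure M (B' \<inter> ?E (Suc k) d) \<le> (\<integral>\<^sup>+x\<in>B'. ennreal (U (Suc k) x) \<partial>M)"
          using Suc.IH[rule_format, OF _ B'F1] k by simp
      qed
      also have "\<dots> \<le> (\<integral>\<^sup>+x\<in>S. ennreal (U k x) \<partial>M) + (\<integral>\<^sup>+x\<in>B'. ennreal (U k x) \<partial>M)"
        using sup[OF k B'F] by (rule add_left_mono)
      also have "\<dots> = (\<integral>\<^sup>+x. ennreal (U k x) * indicator S x + ennreal (U k x) * indicator B' x \<partial>M)"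
      proof (rule nn_integral_add[symmetric])
        have [measurable]: "U k \<in> borel_measurable M" "S \<in> sets M" "B' \<in> sets M" using UM SM B'M by auto
        show "(\<lambda>x. ennreal (U k x) * indicator S x) \<in> borel_measurable M" by measurable
        show "(\<lambda>x. ennreal (U k x) * indicator B' x) \<in> borel_measurable M" by measurable
      qed
      also have "\<dots> = (\<integral>\<^sup>+x\<in>B. ennreal (U k x) \<partial>M)"
        by (intro nn_integral_cong) (auto simp: S_def B'_def indicator_def not_le)
      finally show "ennreal lam * emeasure M (B \<inter> ?E k (Suc d)) \<le> (\<integral>\<^sup>+x\<in>B. ennreal (U k x) \<partial>M)" .
    qed
  }
qed

lemma maximal_inf:
  fixes M :: "'a measure" and F :: "nat \<Rightarrow> 'a measure" and U :: "nat \<Rightarrow> 'a \<Rightarrow> real"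
  assumes sub: "\<And>n. subalgebra M (F n)"
    and mono: "\<And>n m. n \<le> m \<Longrightarrow> sets (F n) \<subseteq> sets (F m)"
    and Umeas: "\<And>n. U n \<in> borel_measurable (F n)"
    and Unn: "\<And>n x. x \<in> space M \<Longrightarrow> 0 \<le> U n x"
    and sup: "\<And>n B. n \<ge> N \<Longrightarrow> B \<in> sets (F n) \<Longrightarrow>
       (\<integral>\<^sup>+x\<in>B. ennreal (U (Suc n) x) \<partial>M) \<le> (\<integral>\<^sup>+x\<in>B. ennreal (U n x) \<partial>M)"
    and k: "k \<ge> N" and B: "B \<in> sets (F k)"
  shows "ennreal lam * emeasure M (B \<inter> {x\<in>space M. \<exists>j\<ge>k. lam \<le> U j x})
       \<le> (\<integral>\<^sup>+x\<in>B. ennreal (U k x) \<partial>M)"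
proof -
  have subM: "\<And>n. sets (F n) \<subseteq> sets M"
    using sub by (auto simp: subalgebra_def)
  have UM: "\<And>n. U n \<in> borel_measurable M"
    using Umeas sub measurable_from_subalg by blast
  have BM: "B \<in> sets M" using B subM by blast
  define A where "A d = B \<inter> {x\<in>space M. \<exists>j. k \<le> j \<and> j \<le> k + d \<and> lam \<le> U j x}" for d
  have AM: "A d \<in> sets M" for d
  proof -
    have Eeq: "A d = B \<inter> (\<Union>j\<in>{k..k+d}. {x\<in>space M. lam \<le> U j x})" unfolding A_def by auto
    have "(\<Union>j\<in>{k..k+d}. {x\<in>space M. lam \<le> U j x}) \<in> sets M"
    proof (rule sets.finite_UN)
      fix j
      have [measurable]: "U j \<in> borel_measurable M" by (rule UM)
      show "{x\<in>space M. lam \<le> U j x} \<in> sets M" by measurable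
    qed simp
    then show ?thesis using BM Eeq by auto
  qed
  have inc: "incseq A" unfolding incseq_def A_def by force
  have U: "(\<Union>d. A d) = B \<inter> {x\<in>space M. \<exists>j\<ge>k. lam \<le> U j x}"
    unfolding A_def by auto (meson le_add2)
  have "emeasure M (B \<inter> {x\<in>space M. \<exists>j\<ge>k. lam \<le> U j x}) = (SUP d. emeasure M (A d))"
  proof -
    have rA: "range A \<subseteq> sets M" using AM by auto
    show ?thesis using SUP_emeasure_incseq[OF rA inc] U by simp
  qed
  then have "ennreal lam * emeasure M (B \<inter> {x\<in>space M. \<exists>j\<ge>k. lam \<le> U j x})
      = (SUP d. ennreal lam * emeasure M (A d))" by (simp add: SUP_mult_left_ennreal)
  also have "\<dots> \<le> (\<integral>\<^sup>+x\<in>B. ennreal (U k x) \<partial>M)"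
  proof (rule SUP_least)
    fix d
    show "ennreal lam * emeasure M (A d) \<le> (\<integral>\<^sup>+x\<in>B. ennreal (U k x) \<partial>M)"
      using maximal_fin[where M=M and F=F and U=U and N=N and lam=lam and d=d, OF sub mono Umeas Unn sup] k B unfolding A_def by blast
  qed
  finally show ?thesis .
qed

lemma sq_pos_taylor:
  fixes u v :: real
  shows "(max 0 u)\<^sup>2 \<le> (max 0 v)\<^sup>2 + 2 * max 0 v * (u - v) + (u - v)\<^sup>2"
proof (cases "v \<ge> 0")
  case True
  have "(max 0 v)\<^sup>2 + 2 * max 0 v * (u - v) + (u - v)\<^sup>2 = u\<^sup>2"
    using True by (simp add: power2_eq_square algebra_simps)
  moreover have "(max 0 u)\<^sup>2 \<le> u\<^sup>2" by (cases "u \<ge> 0") auto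
  ultimately show ?thesis by simp
next
  case False
  have "(max 0 u)\<^sup>2 \<le> (u - v)\<^sup>2"
  proof (cases "u \<ge> 0")
    case True
    then have "max 0 u = u" by simp
    moreover have "u\<^sup>2 \<le> (u - v)\<^sup>2" using True False by (intro power_mono) auto
    ultimately show ?thesis by simp
  qed simp
  then show ?thesis using False by simp
qed

lemma real_key:
  fixes z0 c \<alpha> \<xi> t B p :: real
  assumes z0: "0 \<le> z0" and a: "\<alpha> > 0" and c: "c = \<xi>/\<alpha>" and t: "0 \<le> t" and aB: "\<alpha> \<le> B" and x: "\<xi> > 0"
    and p: "p = max 0 (z0 - c)"
  shows "p\<^sup>2 + (B*t*(z0+1))\<^sup>2 + 2*p*((1-\<alpha>*t)*z0 + \<xi>*t)
       \<le> 2*p*z0 + ((1 - 2*\<alpha>*t + 2*B\<^sup>2*t\<^sup>2) * p\<^sup>2 + 2*B\<^sup>2*(c+1)\<^sup>2*t\<^sup>2)"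
proof -
  have xi: "\<xi> = \<alpha> * c" using a c by simp
  have c0: "c \<ge> 0" using a x c by simp
  have e1: "p*(z0 - c) = p\<^sup>2" by (cases "z0 \<ge> c") (auto simp: p power2_eq_square)
  have e2: "2*p*((1-\<alpha>*t)*z0 + \<xi>*t) = 2*p*z0 - 2*\<alpha>*t*(p*(z0-c))"
    by (simp add: xi algebra_simps)
  have p0: "p \<ge> 0" using p by simp
  have e3: "(z0+1)\<^sup>2 \<le> 2*p\<^sup>2 + 2*(c+1)\<^sup>2"
  proof -
    have "z0 + 1 \<le> p + (c+1)" using p by simp
    then have "(z0+1)\<^sup>2 \<le> (p + (c+1))\<^sup>2" using z0 by (intro power_mono) auto
    also have "\<dots> \<le> 2*p\<^sup>2 + 2*(c+1)\<^sup>2"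
    proof -
      have "0 \<le> (p - (c+1))\<^sup>2" by simp
      then show ?thesis by (simp add: power2_eq_square algebra_simps)
    qed
    finally show ?thesis .
  qed
  have e4: "(B*t*(z0+1))\<^sup>2 = B\<^sup>2*t\<^sup>2*(z0+1)\<^sup>2" by (simp add: power_mult_distrib)
  have e5: "B\<^sup>2*t\<^sup>2*(z0+1)\<^sup>2 \<le> B\<^sup>2*t\<^sup>2*(2*p\<^sup>2 + 2*(c+1)\<^sup>2)"
    using e3 by (intro mult_left_mono) auto
  have "p\<^sup>2 + (B*t*(z0+1))\<^sup>2 + 2*p*((1-\<alpha>*t)*z0 + \<xi>*t)
      = p\<^sup>2 + B\<^sup>2*t\<^sup>2*(z0+1)\<^sup>2 + 2*p*z0 - 2*\<alpha>*t*p\<^sup>2" using e1 e2 e4 by simp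
  also have "\<dots> \<le> p\<^sup>2 + B\<^sup>2*t\<^sup>2*(2*p\<^sup>2 + 2*(c+1)\<^sup>2) + 2*p*z0 - 2*\<alpha>*t*p\<^sup>2" using e5 by simp
  also have "\<dots> = 2*p*z0 + ((1 - 2*\<alpha>*t + 2*B\<^sup>2*t\<^sup>2) * p\<^sup>2 + 2*B\<^sup>2*(c+1)\<^sup>2*t\<^sup>2)"
    by (simp add: algebra_simps)
  finally show ?thesis .
qed

lemma coef_nonneg:
  fixes \<alpha> B t :: real
  assumes "0 < \<alpha>" "\<alpha> \<le> B"
  shows "0 \<le> 1 - 2*\<alpha>*t + 2*B\<^sup>2*t\<^sup>2"
proof -
  have "\<alpha>\<^sup>2 \<le> B\<^sup>2" using assms by (intro power_mono) auto
  then have "\<alpha>\<^sup>2*t\<^sup>2 \<le> B\<^sup>2*t\<^sup>2" by (intro mult_right_mono) auto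
  moreover have "0 \<le> (1 - \<alpha>*t)\<^sup>2 + \<alpha>\<^sup>2*t\<^sup>2" by simp
  moreover have "(1 - \<alpha>*t)\<^sup>2 + \<alpha>\<^sup>2*t\<^sup>2 = 1 - 2*\<alpha>*t + 2*\<alpha>\<^sup>2*t\<^sup>2"
    by (simp add: power2_eq_square algebra_simps)
  ultimately show ?thesis by linarith
qed

lemma weight_step:
  fixes n :: nat and T \<alpha> B \<eta> l :: real
  assumes eta: "0 < \<eta>" and a: "0 < \<alpha>" and aB: "\<alpha> \<le> B" and l: "\<eta>/(2*\<alpha>) < l" and nT: "l < real n * T"
    and T: "0 < T" and small: "2*B\<^sup>2*T \<le> \<alpha>*(1 - \<eta>/(2*\<alpha>)/l)"
  shows "(real n + 2) powr \<eta> * (1 - 2*\<alpha>*T + 2*B\<^sup>2*T\<^sup>2) \<le> (real n + 1) powr \<eta> * exp (-(\<alpha>*(1 - \<eta>/(2*\<alpha>)/l)) * T)"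
proof -
  define \<epsilon> where "\<epsilon> = \<alpha>*(1 - \<eta>/(2*\<alpha>)/l)"
  have l0: "l > 0" using l eta a by (smt (verit) divide_pos_pos)
  have n0: "real n > 0"
  proof (rule ccontr)
    assume "\<not> real n > 0" then have "n = 0" by simp
    then show False using nT l0 by simp
  qed
  define Q where "Q = ((real n + 2)/(real n + 1)) powr \<eta>"
  have Q0: "Q \<ge> 0" by (simp add: Q_def)
  have split: "(real n + 2) powr \<eta> = (real n + 1) powr \<eta> * Q"
    unfolding Q_def by (simp add: powr_divide)
  have Qle: "Q \<le> exp (\<eta>/(real n + 1))"
  proof -
    have "(real n + 2)/(real n + 1) = 1 + 1/(real n + 1)" by (simp add: field_simps)
    then have "ln ((real n + 2)/(real n + 1)) \<le> 1/(real n + 1)"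
      using ln_add_one_self_le_self[of "1/(real n + 1)"] by simp
    then have "\<eta> * ln ((real n + 2)/(real n + 1)) \<le> \<eta>/(real n + 1)"
      using eta mult_left_mono[of _ _ \<eta>] by fastforce
    then show ?thesis unfolding Q_def powr_def by simp
  qed
  have cle: "1 - 2*\<alpha>*T + 2*B\<^sup>2*T\<^sup>2 \<le> exp (- 2*\<alpha>*T + 2*B\<^sup>2*T\<^sup>2)"
  proof -
    have "1 + (- 2*\<alpha>*T + 2*B\<^sup>2*T\<^sup>2) \<le> exp (- 2*\<alpha>*T + 2*B\<^sup>2*T\<^sup>2)" by (rule exp_ge_add_one_self)
    then show ?thesis by linarith
  qed
  have c0: "0 \<le> 1 - 2*\<alpha>*T + 2*B\<^sup>2*T\<^sup>2" by (rule coef_nonneg[OF a aB])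
  define q where "q = \<eta>/(2*\<alpha>)/l"
  have h1: "\<eta>/(real n + 1) \<le> 2*\<alpha>*q*T"
  proof -
    have "\<eta>/(real n + 1) \<le> \<eta>/real n" using n0 eta by (intro divide_left_mono) auto
    also have "\<eta>/real n \<le> \<eta>*T/l"
    proof -
      have "1/real n \<le> T/l" using nT n0 l0 by (simp add: field_simps)
      then show ?thesis using eta mult_left_mono[of "1/real n" "T/l" \<eta>] by simp
    qed
    also have "\<eta>*T/l = 2*\<alpha>*q*T" using a by (simp add: q_def field_simps)
    finally show ?thesis .
  qed
  have h2: "2*B\<^sup>2*T\<^sup>2 \<le> \<alpha>*(1-q)*T"
  proof -
    have "2*B\<^sup>2*T*T \<le> \<alpha>*(1-q)*T"
      using mult_right_mono[OF small, of T] T by (simp add: q_def)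
    then show ?thesis by (simp add: power2_eq_square mult.assoc)
  qed
  have h4: "2*\<alpha>*q*T - 2*\<alpha>*T + \<alpha>*(1-q)*T = - (\<alpha>*(1-q))*T" by (simp add: algebra_simps)
  have h3: "\<eta>/(real n + 1) + (- 2*\<alpha>*T + 2*B\<^sup>2*T\<^sup>2) \<le> - \<epsilon> * T"
    using h1 h2 h4 unfolding \<epsilon>_def q_def by linarith
  have "(real n + 2) powr \<eta> * (1 - 2*\<alpha>*T + 2*B\<^sup>2*T\<^sup>2) = (real n + 1) powr \<eta> * (Q * (1 - 2*\<alpha>*T + 2*B\<^sup>2*T\<^sup>2))"
    by (simp add: split)
  also have "\<dots> \<le> (real n + 1) powr \<eta> * (exp (\<eta>/(real n + 1)) * exp (- 2*\<alpha>*T + 2*B\<^sup>2*T\<^sup>2))"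
    by (intro mult_left_mono mult_mono Qle cle c0) auto
  also have "\<dots> \<le> (real n + 1) powr \<eta> * exp (- \<epsilon> * T)"
    using h3 by (intro mult_left_mono) (auto simp: exp_add[symmetric])
  finally show ?thesis by (simp add: \<epsilon>_def)
qed

lemma infdist_interval:
  fixes z c :: real
  assumes "0 \<le> z" "0 \<le> c"
  shows "infdist z {0..c} = max 0 (z - c)"
proof (cases "z \<le> c")
  case True then show ?thesis using assms by simp
next
  case False
  obtain y where y: "y \<in> {0..c}" "infdist z {0..c} = dist z y"
    using infdist_attains_inf[of "{0..c}" z] assms by auto
  have "infdist z {0..c} \<le> dist z c" using assms by (intro infdist_le) auto
  moreover have "dist z y \<ge> z - c" using y False by (simp add: dist_real_def)
  ultimately show ?thesis using y False by (simp add: dist_real_def)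
qed

lemma V_step:
  fixes M G :: "'a measure" and za zb :: "'a \<Rightarrow> real" and \<alpha> \<xi> t B :: real
  assumes sfs: "sigma_finite_subalgebra M G"
    and zam: "za \<in> borel_measurable G" and zbm: "zb \<in> borel_measurable M"
    and nn0: "\<And>\<omega>. \<omega> \<in> space M \<Longrightarrow> 0 \<le> za \<omega>"
    and drift: "AE \<omega> in M. nn_cond_exp M G (\<lambda>\<omega>. ennreal (zb \<omega>)) \<omega> \<le> ennreal ((1 - \<alpha>*t) * za \<omega> + \<xi>*t)"
    and incr: "AE \<omega> in M. \<bar>zb \<omega> - za \<omega>\<bar> \<le> B*t*(za \<omega> + 1)"
    and ap: "\<alpha> > 0" and xp: "\<xi> > 0" and t0: "0 \<le> t" and at1: "\<alpha>*t \<le> 1" and aB: "\<alpha> \<le> B"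
  shows "AE \<omega> in M. nn_cond_exp M G (\<lambda>\<omega>. ennreal ((max 0 (zb \<omega> - \<xi>/\<alpha>))\<^sup>2)) \<omega>
     \<le> ennreal ((1 - 2*\<alpha>*t + 2*B\<^sup>2*t\<^sup>2) * (max 0 (za \<omega> - \<xi>/\<alpha>))\<^sup>2 + 2*B\<^sup>2*(\<xi>/\<alpha>+1)\<^sup>2*t\<^sup>2)"
proof -
  interpret sigma_finite_subalgebra M G by (rule sfs)
  define c where "c = \<xi>/\<alpha>"
  have c0: "c \<ge> 0" using ap xp by (simp add: c_def)
  define p where "p = (\<lambda>\<omega>. max 0 (za \<omega> - c))"
  define r where "r = (\<lambda>\<omega>. B*t*(za \<omega> + 1))"
  define f1 where "f1 = (\<lambda>\<omega>. ennreal ((max 0 (zb \<omega> - c))\<^sup>2))"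
  define h where "h = (\<lambda>\<omega>. ennreal (2 * p \<omega>))"
  define g1 where "g1 = (\<lambda>\<omega>. h \<omega> * ennreal (za \<omega>))"
  define f2 where "f2 = (\<lambda>\<omega>. ennreal ((p \<omega>)\<^sup>2 + (r \<omega>)\<^sup>2))"
  define g2 where "g2 = (\<lambda>\<omega>. h \<omega> * ennreal (zb \<omega>))"
  define R where "R = (\<lambda>\<omega>. (1 - 2*\<alpha>*t + 2*B\<^sup>2*t\<^sup>2) * (p \<omega>)\<^sup>2 + 2*B\<^sup>2*(c+1)\<^sup>2*t\<^sup>2)"
  have [measurable]: "za \<in> borel_measurable G" "zb \<in> borel_measurable M" using zam zbm by auto
  have zaM[measurable]: "za \<in> borel_measurable M" using zam subalg measurable_from_subalg by blast
  have hG[measurable]: "h \<in> borel_measurable G" unfolding h_def p_def by measurable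
  have hM[measurable]: "h \<in> borel_measurable M" unfolding h_def p_def by measurable
  have f1M[measurable]: "f1 \<in> borel_measurable M" unfolding f1_def by measurable
  have g1G[measurable]: "g1 \<in> borel_measurable G" unfolding g1_def by measurable
  have g1M[measurable]: "g1 \<in> borel_measurable M" unfolding g1_def by measurable
  have f2G[measurable]: "f2 \<in> borel_measurable G" unfolding f2_def p_def r_def by measurable
  have f2M[measurable]: "f2 \<in> borel_measurable M" unfolding f2_def p_def r_def by measurable
  have g2M[measurable]: "g2 \<in> borel_measurable M" unfolding g2_def by measurable
  have zbM': "(\<lambda>\<omega>. ennreal (zb \<omega>)) \<in> borel_measurable M" by measurable
  have subadd: "ennreal (x + y) \<le> ennreal x + ennreal y" if "0 \<le> x" for x y :: real
  proof (cases "y \<ge> 0")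
    case True then show ?thesis using that by simp
  next
    case False
    then have "ennreal (x + y) \<le> ennreal x" by (intro ennreal_leI) simp
    then show ?thesis by (simp add: add_increasing2)
  qed
  have pw: "AE \<omega> in M. f1 \<omega> + g1 \<omega> \<le> f2 \<omega> + g2 \<omega>"
    using incr AE_space
  proof eventually_elim
    case (elim \<omega>)
    have inc: "\<bar>zb \<omega> - za \<omega>\<bar> \<le> B*t*(za \<omega> + 1)" using elim by simp
    have sp: "\<omega> \<in> space M" using elim by simp
    have p0: "p \<omega> \<ge> 0" unfolding p_def by simp
    have sq: "(zb \<omega> - za \<omega>)\<^sup>2 \<le> (r \<omega>)\<^sup>2"
      using inc unfolding r_def by (metis abs_ge_self abs_le_square_iff abs_of_nonneg order_trans power2_abs)
    have tay: "(max 0 (zb \<omega> - c))\<^sup>2 \<le> (p \<omega>)\<^sup>2 + 2 * p \<omega> * (zb \<omega> - za \<omega>) + (zb \<omega> - za \<omega>)\<^sup>2"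
      using sq_pos_taylor[of "zb \<omega> - c" "za \<omega> - c"] unfolding p_def by simp
    have real: "(max 0 (zb \<omega> - c))\<^sup>2 + 2 * p \<omega> * za \<omega> \<le> ((p \<omega>)\<^sup>2 + (r \<omega>)\<^sup>2) + 2 * p \<omega> * zb \<omega>"
      using tay sq by (simp add: algebra_simps)
    have "f1 \<omega> + g1 \<omega> = ennreal ((max 0 (zb \<omega> - c))\<^sup>2 + 2 * p \<omega> * za \<omega>)"
      unfolding f1_def g1_def h_def using p0 nn0[OF sp] by (simp add: ennreal_mult)
    also have "\<dots> \<le> ennreal (((p \<omega>)\<^sup>2 + (r \<omega>)\<^sup>2) + 2 * p \<omega> * zb \<omega>)"
      using real by (rule ennreal_leI)
    also have "\<dots> \<le> ennreal ((p \<omega>)\<^sup>2 + (r \<omega>)\<^sup>2) + ennreal (2 * p \<omega> * zb \<omega>)"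
      by (rule subadd) simp
    also have "\<dots> = f2 \<omega> + g2 \<omega>"
      unfolding f2_def g2_def h_def using p0 by (simp add: ennreal_mult')
    finally show ?case .
  qed
  have A1: "AE \<omega> in M. nn_cond_exp M G (\<lambda>\<omega>. f1 \<omega> + g1 \<omega>) \<omega> \<le> nn_cond_exp M G (\<lambda>\<omega>. f2 \<omega> + g2 \<omega>) \<omega>"
    by (rule nn_cond_exp_mono[OF pw]) measurable
  have A2: "AE \<omega> in M. nn_cond_exp M G f1 \<omega> + nn_cond_exp M G g1 \<omega> = nn_cond_exp M G (\<lambda>\<omega>. f1 \<omega> + g1 \<omega>) \<omega>"
    by (rule nn_cond_exp_sum) measurable
  have A3: "AE \<omega> in M. g1 \<omega> = nn_cond_exp M G g1 \<omega>" by (rule nn_cond_exp_F_meas) measurable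
  have A4: "AE \<omega> in M. nn_cond_exp M G f2 \<omega> + nn_cond_exp M G g2 \<omega> = nn_cond_exp M G (\<lambda>\<omega>. f2 \<omega> + g2 \<omega>) \<omega>"
    by (rule nn_cond_exp_sum) measurable
  have A5: "AE \<omega> in M. f2 \<omega> = nn_cond_exp M G f2 \<omega>" by (rule nn_cond_exp_F_meas) measurable
  have A6: "AE \<omega> in M. h \<omega> * nn_cond_exp M G (\<lambda>\<omega>. ennreal (zb \<omega>)) \<omega> = nn_cond_exp M G g2 \<omega>"
    unfolding g2_def by (rule nn_cond_exp_prod) measurable
  show ?thesis
    using A1 A2 A3 A4 A5 A6 drift AE_space
  proof eventually_elim
    case (elim \<omega>)
    have sp: "\<omega> \<in> space M" using elim by simp
    have p0: "p \<omega> \<ge> 0" unfolding p_def by simp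
    define m where "m = (1 - \<alpha>*t) * za \<omega> + \<xi>*t"
    have m0: "m \<ge> 0" unfolding m_def using at1 nn0[OF sp] xp t0 by simp
    have R0: "R \<omega> \<ge> 0" unfolding R_def using coef_nonneg[OF ap aB, of t] by simp
    have "nn_cond_exp M G f1 \<omega> + g1 \<omega> = nn_cond_exp M G (\<lambda>\<omega>. f1 \<omega> + g1 \<omega>) \<omega>"
      using elim by simp
    also have "\<dots> \<le> nn_cond_exp M G (\<lambda>\<omega>. f2 \<omega> + g2 \<omega>) \<omega>" using elim by simp
    also have "\<dots> = f2 \<omega> + h \<omega> * nn_cond_exp M G (\<lambda>\<omega>. ennreal (zb \<omega>)) \<omega>"
      using elim by simp
    also have "\<dots> \<le> f2 \<omega> + h \<omega> * ennreal m"
      using elim unfolding m_def by (intro add_left_mono mult_left_mono) auto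
    also have "\<dots> = ennreal ((p \<omega>)\<^sup>2 + (r \<omega>)\<^sup>2 + 2 * p \<omega> * m)"
      unfolding f2_def h_def using p0 m0 by (simp add: ennreal_mult)
    also have "\<dots> \<le> ennreal (2 * p \<omega> * za \<omega> + R \<omega>)"
      using real_key[OF nn0[OF sp] ap c_def t0 aB xp, of "p \<omega>"] unfolding R_def r_def m_def p_def
      by (intro ennreal_leI) simp
    also have "\<dots> = g1 \<omega> + ennreal (R \<omega>)"
      unfolding g1_def h_def using p0 nn0[OF sp] R0 by (simp add: ennreal_mult)
    finally have "g1 \<omega> + nn_cond_exp M G f1 \<omega> \<le> g1 \<omega> + ennreal (R \<omega>)" by (simp add: add.commute)
    moreover have "g1 \<omega> \<noteq> \<infinity>" unfolding g1_def h_def by (simp add: ennreal_mult_eq_top_iff)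
    ultimately have "nn_cond_exp M G f1 \<omega> \<le> ennreal (R \<omega>)" by (simp add: ennreal_add_left_cancel_le)
    then show ?case unfolding f1_def R_def p_def c_def by simp
  qed
qed

theorem theorem3:
  fixes M :: "'a measure" and F :: "nat \<Rightarrow> 'a measure"
    and z :: "nat \<Rightarrow> 'a \<Rightarrow> real" and T :: "nat \<Rightarrow> real"
    and \<alpha> \<xi> B\<^sub>1 \<eta> :: real
  assumes prob: "prob_space M"
    and filt_sub: "\<And>n. subalgebra M (F n)"
    and filt_mono: "\<And>n m. n \<le> m \<Longrightarrow> sets (F n) \<subseteq> sets (F m)"
    and alpha_pos: "\<alpha> > 0" and xi_pos: "\<xi> > 0"
    and T_range: "\<And>n. 0 < T n \<and> T n < 1"
    and T_decr: "\<And>n. T (Suc n) < T n"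
    and T_not_summable: "\<not> summable T"
    and T_sq_summable: "summable (\<lambda>n. (T n)\<^sup>2)"
    and z_nonneg: "\<And>n \<omega>. \<omega> \<in> space M \<Longrightarrow> z n \<omega> \<ge> 0"
    and z_adapted: "\<And>n. z n \<in> borel_measurable (F n)"
    and z_drift: "\<And>n. AE \<omega> in M. nn_cond_exp M (F n) (\<lambda>\<omega>'. ennreal (z (Suc n) \<omega>')) \<omega>
                     \<le> ennreal ((1 - \<alpha> * T n) * z n \<omega> + \<xi> * T n)"
    and B1_ge: "B\<^sub>1 \<ge> \<alpha>"
    and z_incr: "\<And>n. AE \<omega> in M. \<bar>z (Suc n) \<omega> - z n \<omega>\<bar> \<le> B\<^sub>1 * T n * (z n \<omega> + 1)"
    and eta_pos: "\<eta> > 0"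
    and A1: "liminf (\<lambda>n. ereal (real n * T n)) > ereal (\<eta> / (2 * \<alpha>))"
    and A2: "summable (\<lambda>n. (real n + 1) powr \<eta> * (T n)\<^sup>2)"
  shows "AE \<omega> in M. (\<lambda>n. real n powr (\<eta> / 2) * infdist (z n \<omega>) {0 .. \<xi> / \<alpha>}) \<longlonglongrightarrow> 0"
proof -
  interpret prob_space M by (rule prob)
  have fm: "finite_measure M" using prob by (simp add: prob_space_def)
  have sfs: "sigma_finite_subalgebra M (F n)" for n
    by (intro finite_measure_subalgebra_is_sigma_finite finite_measure_subalgebra.intro fm
        finite_measure_subalgebra_axioms.intro filt_sub)
  have spF: "space (F n) = space M" for n using filt_sub[of n] by (simp add: subalgebra_def)
  have setsF: "sets (F n) \<subseteq> sets M" for n using filt_sub[of n] by (simp add: subalgebra_def)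
  have zM: "z n \<in> borel_measurable M" for n
    using z_adapted filt_sub measurable_from_subalg by blast
  have Tpos: "0 < T n" for n using T_range by simp
  define c where "c = \<xi>/\<alpha>"
  have c0: "c \<ge> 0" using alpha_pos xi_pos by (simp add: c_def)
  define K where "K = 2*B\<^sub>1\<^sup>2*(c+1)\<^sup>2"
  have K0: "K \<ge> 0" by (simp add: K_def)
  define V where "V n \<omega> = (max 0 (z n \<omega> - c))\<^sup>2" for n \<omega>
  define W where "W n \<omega> = (real n + 1) powr \<eta> * V n \<omega>" for n \<omega>
  define f where "f n = (real n + 2) powr \<eta> * (K * (T n)\<^sup>2)" for n
  define t where "t n = (\<Sum>j. f (j + n))" for n
  define U where "U n \<omega> = W n \<omega> + t n" for n \<omega>
  define coef where "coef n = 1 - 2*\<alpha>*T n + 2*B\<^sub>1\<^sup>2*(T n)\<^sup>2" for n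
  have V0: "V n \<omega> \<ge> 0" for n \<omega> by (simp add: V_def)
  have W0: "W n \<omega> \<ge> 0" for n \<omega> by (simp add: W_def V0)
  have f0: "f n \<ge> 0" for n using K0 by (simp add: f_def)
  have WF[measurable]: "W n \<in> borel_measurable (F n)" for n
  proof -
    have [measurable]: "z n \<in> borel_measurable (F n)" by (rule z_adapted)
    show ?thesis unfolding W_def V_def by measurable
  qed
  have WM[measurable]: "W n \<in> borel_measurable M" for n
    using WF filt_sub measurable_from_subalg by blast
  have fs: "summable f"
  proof (rule summable_comparison_test')
    show "summable (\<lambda>n. 2 powr \<eta> * K * ((real n + 1) powr \<eta> * (T n)\<^sup>2))"
      using A2 by (intro summable_mult)
    fix n :: nat
    have "(real n + 2) powr \<eta> \<le> (2 * (real n + 1)) powr \<eta>"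
      using eta_pos by (intro powr_mono2) auto
    also have "\<dots> = 2 powr \<eta> * (real n + 1) powr \<eta>" using powr_mult[of 2 "real n + 1" \<eta>] by simp
    finally have "(real n + 2) powr \<eta> * (K * (T n)\<^sup>2) \<le> 2 powr \<eta> * (real n + 1) powr \<eta> * (K * (T n)\<^sup>2)"
      using K0 by (intro mult_right_mono) auto
    then show "norm (f n) \<le> 2 powr \<eta> * K * ((real n + 1) powr \<eta> * (T n)\<^sup>2)"
      using f0[of n] by (simp add: f_def mult_ac)
  qed
  have fs': "summable (\<lambda>j. f (j + n))" for n using fs by (simp add: summable_iff_shift)
  have t0: "t n \<ge> 0" for n unfolding t_def using fs' f0 by (simp add: suminf_nonneg)
  have tstep: "t n = f n + t (Suc n)" for n
  proof -
    have "(\<Sum>j. f (Suc j + n)) = (\<Sum>j. f (j + n)) - f (0 + n)"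
      by (rule suminf_split_head[OF fs'])
    then show ?thesis unfolding t_def by simp
  qed
  have tlim: "t \<longlonglongrightarrow> 0"
  proof (rule LIMSEQ_I)
    fix r :: real assume "r > 0"
    then obtain N0 where "\<forall>n\<ge>N0. norm (\<Sum>i. f (i + n)) < r" using suminf_exist_split fs by blast
    then show "\<exists>no. \<forall>n\<ge>no. norm (t n - 0) < r" unfolding t_def by auto
  qed
  have Tlim: "T \<longlonglongrightarrow> 0"
  proof -
    have "(\<lambda>n. (T n)\<^sup>2) \<longlonglongrightarrow> 0" by (rule summable_LIMSEQ_zero[OF T_sq_summable])
    then have "(\<lambda>n. sqrt ((T n)\<^sup>2)) \<longlonglongrightarrow> sqrt 0" by (rule tendsto_real_sqrt)
    moreover have "(\<lambda>n. sqrt ((T n)\<^sup>2)) = T" using Tpos by (auto simp: fun_eq_iff less_imp_le)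
    ultimately show ?thesis by simp
  qed
  obtain l where l1': "ereal (\<eta>/(2*\<alpha>)) < ereal l" and l2: "ereal l < liminf (\<lambda>n. ereal (real n * T n))"
    using ereal_dense2[OF A1] by auto
  have l1: "\<eta>/(2*\<alpha>) < l" using l1' by simp
  define \<epsilon> where "\<epsilon> = \<alpha>*(1 - \<eta>/(2*\<alpha>)/l)"
  have l0: "l > 0" using l1 eta_pos alpha_pos by (smt (verit) divide_pos_pos)
  have eps0: "\<epsilon> > 0"
  proof -
    have "\<eta>/(2*\<alpha>)/l < l/l" using l1 l0 by (intro divide_strict_right_mono) auto
    then have "0 < 1 - \<eta>/(2*\<alpha>)/l" using l0 by simp
    then show ?thesis using alpha_pos unfolding \<epsilon>_def by (rule mult_pos_pos[rotated])
  qed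
  have B0: "B\<^sub>1 > 0" using B1_ge alpha_pos by simp
  have ev1: "eventually (\<lambda>n. ereal l < ereal (real n * T n)) sequentially"
    using less_LiminfD[OF l2] by simp
  have ev2: "eventually (\<lambda>n. T n < \<epsilon>/(2*B\<^sub>1\<^sup>2)) sequentially"
    using order_tendstoD(2)[OF Tlim] eps0 B0 by simp
  have ev3: "eventually (\<lambda>n. T n < 1/\<alpha>) sequentially"
    using order_tendstoD(2)[OF Tlim] alpha_pos by simp
  obtain N where N: "\<And>n. n \<ge> N \<Longrightarrow> ereal l < ereal (real n * T n) \<and> T n < \<epsilon>/(2*B\<^sub>1\<^sup>2) \<and> T n < 1/\<alpha>"
    using eventually_conj[OF ev1 eventually_conj[OF ev2 ev3]] unfolding eventually_sequentially by blast
  have at1: "\<alpha> * T n \<le> 1" if "n \<ge> N" for n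
  proof -
    have "T n < 1/\<alpha>" using N[OF that] by simp
    then show ?thesis using alpha_pos by (simp add: field_simps)
  qed
  have wstep: "(real n + 2) powr \<eta> * coef n \<le> (real n + 1) powr \<eta> * exp (- \<epsilon> * T n)" if "n \<ge> N" for n
  proof -
    have nT: "l < real n * T n" using N[OF that] by simp
    have "T n < \<epsilon>/(2*B\<^sub>1\<^sup>2)" using N[OF that] by simp
    then have sm: "2*B\<^sub>1\<^sup>2*T n \<le> \<alpha>*(1 - \<eta>/(2*\<alpha>)/l)" using B0 by (simp add: \<epsilon>_def field_simps)
    show ?thesis using weight_step[OF eta_pos alpha_pos B1_ge l1 nT Tpos sm]
      by (simp add: coef_def \<epsilon>_def)
  qed
  have D: "AE \<omega> in M. nn_cond_exp M (F n) (\<lambda>\<omega>. ennreal (V (Suc n) \<omega>)) \<omega> \<le> ennreal (coef n * V n \<omega> + K * (T n)\<^sup>2)"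
    if n: "n \<ge> N" for n
  proof -
    have "AE \<omega> in M. nn_cond_exp M (F n) (\<lambda>\<omega>. ennreal ((max 0 (z (Suc n) \<omega> - \<xi>/\<alpha>))\<^sup>2)) \<omega>
     \<le> ennreal ((1 - 2*\<alpha>*T n + 2*B\<^sub>1\<^sup>2*(T n)\<^sup>2) * (max 0 (z n \<omega> - \<xi>/\<alpha>))\<^sup>2 + 2*B\<^sub>1\<^sup>2*(\<xi>/\<alpha>+1)\<^sup>2*(T n)\<^sup>2)"
      apply (rule V_step[where M=M and G="F n" and za="z n" and zb="z (Suc n)" and t="T n" and B="B\<^sub>1" and \<alpha>=\<alpha> and \<xi>=\<xi>])
                apply (rule sfs)
               apply (rule z_adapted)
              apply (rule zM)
             apply (erule z_nonneg)
            apply (rule z_drift)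
           apply (rule z_incr)
          apply (rule alpha_pos)
         apply (rule xi_pos)
        apply (simp add: less_imp_le Tpos)
       apply (rule at1[OF n])
      apply (rule B1_ge)
      done
    then show ?thesis by (simp add: V_def c_def coef_def K_def)
  qed
  have I: "(\<integral>\<^sup>+x\<in>B. ennreal (W (Suc n) x) \<partial>M) \<le> (\<integral>\<^sup>+x\<in>B. ennreal (exp (- \<epsilon> * T n) * W n x + f n) \<partial>M)"
    if n: "n \<ge> N" and B: "B \<in> sets (F n)" for n B
  proof -
    define w where "w = (real (Suc n) + 1) powr \<eta>"
    have w0: "w \<ge> 0" by (simp add: w_def)
    have [measurable]: "B \<in> sets (F n)" by (rule B)
    have VM: "(\<lambda>x. ennreal (V (Suc n) x)) \<in> borel_measurable M"
    proof -
      have [measurable]: "z (Suc n) \<in> borel_measurable M" by (rule zM)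
      show ?thesis unfolding V_def by measurable
    qed
    have hF: "(\<lambda>x. ennreal w * indicator B x) \<in> borel_measurable (F n)" by measurable
    have "(\<integral>\<^sup>+x\<in>B. ennreal (W (Suc n) x) \<partial>M) = (\<integral>\<^sup>+x. (ennreal w * indicator B x) * ennreal (V (Suc n) x) \<partial>M)"
      by (intro nn_integral_cong) (simp add: W_def w_def V0 ennreal_mult mult_ac)
    also have "\<dots> = (\<integral>\<^sup>+x. (ennreal w * indicator B x) * nn_cond_exp M (F n) (\<lambda>x. ennreal (V (Suc n) x)) x \<partial>M)"
      by (rule sigma_finite_subalgebra.nn_cond_exp_intg[OF sfs hF VM, symmetric])
    also have "\<dots> \<le> (\<integral>\<^sup>+x. (ennreal w * indicator B x) * ennreal (coef n * V n x + K*(T n)\<^sup>2) \<partial>M)"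
    proof (rule nn_integral_mono_AE)
      show "AE x in M. (ennreal w * indicator B x) * nn_cond_exp M (F n) (\<lambda>x. ennreal (V (Suc n) x)) x
          \<le> (ennreal w * indicator B x) * ennreal (coef n * V n x + K*(T n)\<^sup>2)"
        using D[OF n]
      proof eventually_elim
        case (elim x)
        show ?case by (rule mult_left_mono[OF elim]) simp
      qed
    qed
    also have "\<dots> \<le> (\<integral>\<^sup>+x\<in>B. ennreal (exp (- \<epsilon> * T n) * W n x + f n) \<partial>M)"
    proof (rule nn_integral_mono)
      fix x
      have ws: "w * coef n \<le> (real n + 1) powr \<eta> * exp (- \<epsilon> * T n)"
      proof -
        have "real (Suc n) + 1 = real n + 2" by simp
        then have "w = (real n + 2) powr \<eta>" by (simp only: w_def)
        then show ?thesis using wstep[OF n] by simp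
      qed
      have "w * (coef n * V n x + K*(T n)\<^sup>2) = (w * coef n) * V n x + w * (K*(T n)\<^sup>2)"
        by (simp add: algebra_simps)
      also have "\<dots> \<le> ((real n + 1) powr \<eta> * exp (- \<epsilon> * T n)) * V n x + f n"
      proof (rule add_mono)
        show "(w * coef n) * V n x \<le> ((real n + 1) powr \<eta> * exp (- \<epsilon> * T n)) * V n x"
          using ws V0[of n x] by (rule mult_right_mono)
        have "real (Suc n) + 1 = real n + 2" by simp
        then have "w = (real n + 2) powr \<eta>" by (simp only: w_def)
        then show "w * (K*(T n)\<^sup>2) \<le> f n" by (simp add: f_def)
      qed
      also have "\<dots> = exp (- \<epsilon> * T n) * W n x + f n" by (simp add: W_def mult_ac)
      finally have real: "w * (coef n * V n x + K*(T n)\<^sup>2) \<le> exp (- \<epsilon> * T n) * W n x + f n" .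
      have "ennreal w * ennreal (coef n * V n x + K*(T n)\<^sup>2) \<le> ennreal (exp (- \<epsilon> * T n) * W n x + f n)"
        using real w0 by (simp add: ennreal_mult'[symmetric] ennreal_leI)
      then show "(ennreal w * indicator B x) * ennreal (coef n * V n x + K*(T n)\<^sup>2)
          \<le> ennreal (exp (- \<epsilon> * T n) * W n x + f n) * indicator B x"
        by (cases "x \<in> B") (auto simp: mult_ac)
    qed
    finally show ?thesis .
  qed
  have UF[measurable]: "U n \<in> borel_measurable (F n)" for n unfolding U_def by measurable
  have UM[measurable]: "U n \<in> borel_measurable M" for n
    using UF filt_sub measurable_from_subalg by blast
  have U0: "0 \<le> U n x" for n x by (simp add: U_def W0 t0 add_nonneg_nonneg)
  have S: "(\<integral>\<^sup>+x\<in>B. ennreal (U (Suc n) x) \<partial>M) \<le> (\<integral>\<^sup>+x\<in>B. ennreal (U n x) \<partial>M)"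
    if n: "n \<ge> N" and B: "B \<in> sets (F n)" for n B
  proof -
    have BM[measurable]: "B \<in> sets M" using B setsF by blast
    have "(\<integral>\<^sup>+x\<in>B. ennreal (U (Suc n) x) \<partial>M)
        = (\<integral>\<^sup>+x. ennreal (W (Suc n) x) * indicator B x + ennreal (t (Suc n)) * indicator B x \<partial>M)"
      by (intro nn_integral_cong) (simp add: U_def W0 t0 distrib_right)
    also have "\<dots> = (\<integral>\<^sup>+x\<in>B. ennreal (W (Suc n) x) \<partial>M) + (\<integral>\<^sup>+x. ennreal (t (Suc n)) * indicator B x \<partial>M)"
      by (rule nn_integral_add) measurable
    also have "\<dots> \<le> (\<integral>\<^sup>+x\<in>B. ennreal (exp (- \<epsilon> * T n) * W n x + f n) \<partial>M) + (\<integral>\<^sup>+x. ennreal (t (Suc n)) * indicator B x \<partial>M)"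
      using I[OF n B] by (rule add_right_mono)
    also have "\<dots> = (\<integral>\<^sup>+x. ennreal (exp (- \<epsilon> * T n) * W n x + f n) * indicator B x + ennreal (t (Suc n)) * indicator B x \<partial>M)"
      by (rule nn_integral_add[symmetric]) measurable
    also have "\<dots> \<le> (\<integral>\<^sup>+x\<in>B. ennreal (U n x) \<partial>M)"
    proof (rule nn_integral_mono)
      fix x
      have e: "exp (- \<epsilon> * T n) \<le> 1" using eps0 Tpos[of n] by simp
      have "exp (- \<epsilon> * T n) * W n x \<le> W n x" using e W0[of n x] by (simp add: mult_left_le_one_le)
      then have r: "exp (- \<epsilon> * T n) * W n x + f n + t (Suc n) \<le> U n x" using tstep[of n] by (simp add: U_def)
      have nn: "0 \<le> exp (- \<epsilon> * T n) * W n x + f n" using W0[of n x] f0[of n] by simp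
      have eq: "ennreal (exp (- \<epsilon> * T n) * W n x + f n) + ennreal (t (Suc n)) = ennreal (exp (- \<epsilon> * T n) * W n x + f n + t (Suc n))"
        by (rule ennreal_plus[symmetric, OF nn t0])
      show "ennreal (exp (- \<epsilon> * T n) * W n x + f n) * indicator B x + ennreal (t (Suc n)) * indicator B x
          \<le> ennreal (U n x) * indicator B x"
      proof (cases "x \<in> B")
        case True
        then show ?thesis using eq r by (simp add: ennreal_leI)
      qed simp
    qed
    finally show ?thesis .
  qed
  have fin_bound: "AE x in M. x \<notin> ({x\<in>space M. W N x \<le> real L} \<inter> {x\<in>space M. \<forall>n. \<exists>j\<ge>n. 1 / real (Suc i) \<le> W j x})"
    for L i :: nat
  proof -
    define lam where "lam = 1 / real (Suc i)"
    have lam0: "lam > 0" by (simp add: lam_def)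
    define BL where "BL = {x\<in>space M. W N x \<le> real L}"
    define E where "E = {x\<in>space M. \<forall>n. \<exists>j\<ge>n. lam \<le> W j x}"
    have "{x\<in>space (F N). W N x \<le> real L} \<in> sets (F N)" by measurable
    then have BLF: "BL \<in> sets (F N)" by (simp add: BL_def spF)
    have BLM[measurable]: "BL \<in> sets M" using BLF setsF by blast
    have BLFn: "BL \<in> sets (F n)" if "n \<ge> N" for n using BLF filt_mono[OF that] by blast
    have EM[measurable]: "E \<in> sets M" unfolding E_def by measurable
    define II where "II n = (\<integral>\<^sup>+x\<in>BL. ennreal (W n x) \<partial>M)" for n
    have m0: "(\<lambda>x. ennreal (W n x) * indicator BL x) \<in> borel_measurable M" for n
    proof -
      have "(\<lambda>x. ennreal (W n x)) \<in> borel_measurable M" using WM[of n] by (rule measurable_compose[OF _ measurable_ennreal])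
      then show ?thesis by (rule borel_measurable_times_ennreal[OF _ borel_measurable_indicator[OF BLM]])
    qed
    have m1: "(\<lambda>x. c' * (ennreal (W n x) * indicator BL x)) \<in> borel_measurable M" for n c'
      by (rule borel_measurable_times_ennreal[OF borel_measurable_const m0])
    have m2: "(\<lambda>x. c' * indicator BL x) \<in> borel_measurable M" for c' :: ennreal
      by (rule borel_measurable_times_ennreal[OF borel_measurable_const borel_measurable_indicator[OF BLM]])
    have Irec: "II (Suc n) \<le> ennreal (exp (- \<epsilon> * T n)) * II n + ennreal (f n)" if n: "n \<ge> N" for n
    proof -
      have "II (Suc n) \<le> (\<integral>\<^sup>+x\<in>BL. ennreal (exp (- \<epsilon> * T n) * W n x + f n) \<partial>M)"
        unfolding II_def by (rule I[OF n BLFn[OF n]])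
      also have "\<dots> = (\<integral>\<^sup>+x. ennreal (exp (- \<epsilon> * T n)) * (ennreal (W n x) * indicator BL x) + ennreal (f n) * indicator BL x \<partial>M)"
      proof (intro nn_integral_cong)
        fix x
        have "ennreal (exp (- \<epsilon> * T n) * W n x + f n) = ennreal (exp (- \<epsilon> * T n)) * ennreal (W n x) + ennreal (f n)"
          using W0[of n x] f0[of n] by (simp add: ennreal_mult')
        then show "ennreal (exp (- \<epsilon> * T n) * W n x + f n) * indicator BL x
            = ennreal (exp (- \<epsilon> * T n)) * (ennreal (W n x) * indicator BL x) + ennreal (f n) * indicator BL x"
          by (cases "x \<in> BL") simp_all
      qed
      also have "\<dots> = (\<integral>\<^sup>+x. ennreal (exp (- \<epsilon> * T n)) * (ennreal (W n x) * indicator BL x) \<partial>M) + (\<integral>\<^sup>+x. ennreal (f n) * indicator BL x \<partial>M)"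
        by (rule nn_integral_add[OF m1 m2])
      also have "\<dots> = ennreal (exp (- \<epsilon> * T n)) * II n + ennreal (f n) * emeasure M BL"
      proof -
        have "(\<integral>\<^sup>+x. ennreal (exp (- \<epsilon> * T n)) * (ennreal (W n x) * indicator BL x) \<partial>M) = ennreal (exp (- \<epsilon> * T n)) * II n"
          unfolding II_def by (rule nn_integral_cmult[OF m0])
        moreover have "(\<integral>\<^sup>+x. ennreal (f n) * indicator BL x \<partial>M) = ennreal (f n) * emeasure M BL"
          by (rule nn_integral_cmult_indicator) (rule BLM)
        ultimately show ?thesis by simp
      qed
      also have "\<dots> \<le> ennreal (exp (- \<epsilon> * T n)) * II n + ennreal (f n)"
        using emeasure_le_1 mult_left_mono[of "emeasure M BL" 1 "ennreal (f n)"] by (intro add_left_mono) auto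
      finally show ?thesis .
    qed
    have IN: "II N \<le> ennreal (real L)"
    proof -
      have "II N \<le> (\<integral>\<^sup>+x. ennreal (real L) * indicator BL x \<partial>M)"
        unfolding II_def by (intro nn_integral_mono) (auto simp: BL_def indicator_def ennreal_leI)
      also have "\<dots> = ennreal (real L) * emeasure M BL" by (rule nn_integral_cmult_indicator) (rule BLM)
      also have "\<dots> \<le> ennreal (real L) * 1" using emeasure_le_1 by (intro mult_left_mono) auto
      finally show ?thesis by simp
    qed
    have Ifin: "II n < \<infinity>" if "n \<ge> N" for n
      using that
    proof (induction n rule: dec_induct)
      case base
      then show ?case using IN by (simp add: le_less_trans[OF IN])
    next
      case (step n)
      have "ennreal (exp (- \<epsilon> * T n)) * II n + ennreal (f n) < \<infinity>"
        using step.IH by (simp add: ennreal_mult_less_top)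
      then show ?case using Irec[OF step.hyps(1)] by (rule le_less_trans[rotated])
    qed
    define a where "a n = enn2real (II n)" for n
    have a0: "0 \<le> a n" for n by (simp add: a_def enn2real_nonneg)
    have Ia: "II n = ennreal (a n)" if "n \<ge> N" for n
      using Ifin[OF that] by (simp add: a_def ennreal_enn2real less_top)
    have arec: "a (Suc n) \<le> exp (- \<epsilon> * T n) * a n + f n" if n: "n \<ge> N" for n
    proof -
      have "ennreal (a (Suc n)) \<le> ennreal (exp (- \<epsilon> * T n)) * ennreal (a n) + ennreal (f n)"
        using Irec[OF n] Ia[OF n] Ia[of "Suc n"] n by simp
      also have "\<dots> = ennreal (exp (- \<epsilon> * T n) * a n + f n)"
        using a0[of n] f0[of n] by (simp add: ennreal_mult')
      finally show ?thesis using a0[of n] f0[of n] by (subst (asm) ennreal_le_iff) auto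
    qed
    have alim: "a \<longlonglongrightarrow> 0"
      apply (rule det_conv[where N=N and a=a and f=f and T=T and \<epsilon>=\<epsilon>])
            apply (erule arec)
           apply (rule f0)
          apply (rule fs)
         apply (simp add: less_imp_le Tpos)
        apply (rule T_not_summable)
       apply (rule eps0)
      apply (rule a0)
      done
    have Ubound: "(\<integral>\<^sup>+x\<in>BL. ennreal (U n x) \<partial>M) \<le> ennreal (a n + t n)" if n: "n \<ge> N" for n
    proof -
      have "(\<integral>\<^sup>+x\<in>BL. ennreal (U n x) \<partial>M) = (\<integral>\<^sup>+x. ennreal (W n x) * indicator BL x + ennreal (t n) * indicator BL x \<partial>M)"
        by (intro nn_integral_cong) (simp add: U_def W0 t0 distrib_right)
      also have "\<dots> = II n + (\<integral>\<^sup>+x. ennreal (t n) * indicator BL x \<partial>M)"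
        unfolding II_def by (rule nn_integral_add[OF m0 m2])
      also have "\<dots> = II n + ennreal (t n) * emeasure M BL"
        using nn_integral_cmult_indicator[OF BLM, of "ennreal (t n)"] by simp
      also have "\<dots> \<le> ennreal (a n) + ennreal (t n) * 1"
        using Ia[OF n] emeasure_le_1 by (intro add_mono mult_left_mono) auto
      also have "\<dots> = ennreal (a n + t n)" using a0[of n] t0[of n] by simp
      finally show ?thesis .
    qed
    have le: "ennreal lam * emeasure M (BL \<inter> E) \<le> ennreal (a n + t n)" if n: "n \<ge> N" for n
    proof -
      have sub: "BL \<inter> E \<subseteq> BL \<inter> {x\<in>space M. \<exists>j\<ge>n. lam \<le> U j x}"
      proof
        fix x assume x: "x \<in> BL \<inter> E"
        then obtain j where "j \<ge> n" "lam \<le> W j x" unfolding E_def by blast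
        moreover have "W j x \<le> U j x" using t0[of j] by (simp add: U_def)
        ultimately show "x \<in> BL \<inter> {x\<in>space M. \<exists>j\<ge>n. lam \<le> U j x}" using x unfolding E_def by force
      qed
      have mb: "BL \<inter> {x\<in>space M. \<exists>j\<ge>n. lam \<le> U j x} \<in> sets M" by measurable
      have "ennreal lam * emeasure M (BL \<inter> E) \<le> ennreal lam * emeasure M (BL \<inter> {x\<in>space M. \<exists>j\<ge>n. lam \<le> U j x})"
        by (intro mult_left_mono emeasure_mono[OF sub mb]) auto
      also have "\<dots> \<le> (\<integral>\<^sup>+x\<in>BL. ennreal (U n x) \<partial>M)"
        apply (rule maximal_inf[where M=M and F=F and U=U and N=N and k=n and B=BL and lam=lam])
              apply (rule filt_sub)
             apply (erule filt_mono)
            apply (rule UF)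
           apply (rule U0)
          apply (erule S, assumption)
         apply (rule n)
        apply (rule BLFn[OF n])
        done
      also have "\<dots> \<le> ennreal (a n + t n)" by (rule Ubound[OF n])
      finally show ?thesis .
    qed
    have lim: "(\<lambda>n. ennreal (a n + t n)) \<longlonglongrightarrow> ennreal 0"
      using tendsto_add[OF alim tlim] by (intro tendsto_ennrealI) simp
    have "ennreal lam * emeasure M (BL \<inter> E) \<le> ennreal 0"
      using lim le by (intro LIMSEQ_le_const[OF lim] exI[of _ N]) blast
    then have "emeasure M (BL \<inter> E) = 0" using lam0 by simp
    then have "BL \<inter> E \<in> null_sets M" by (intro null_setsI) measurable
    then show ?thesis unfolding BL_def E_def lam_def by (rule AE_not_in)
  qed
  have "AE x in M. \<forall>L::nat. \<forall>i::nat. x \<notin> ({x\<in>space M. W N x \<le> real L} \<inter> {x\<in>space M. \<forall>n. \<exists>j\<ge>n. 1 / real (Suc i) \<le> W j x})"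
    apply (subst AE_all_countable)
    apply (intro allI)
    apply (subst AE_all_countable)
    apply (intro allI)
    apply (rule fin_bound)
    done
  then have "AE x in M. x \<in> space M \<and> (\<forall>L::nat. \<forall>i::nat. x \<notin> ({x\<in>space M. W N x \<le> real L} \<inter> {x\<in>space M. \<forall>n. \<exists>j\<ge>n. 1 / real (Suc i) \<le> W j x}))"
    using AE_space by (rule eventually_conj[rotated])
  then show ?thesis
  proof (rule eventually_mono)
    fix x assume H: "x \<in> space M \<and> (\<forall>L::nat. \<forall>i::nat. x \<notin> ({x\<in>space M. W N x \<le> real L} \<inter> {x\<in>space M. \<forall>n. \<exists>j\<ge>n. 1 / real (Suc i) \<le> W j x}))"
    have sp: "x \<in> space M" using H by simp
    have nb: "\<And>L i. x \<notin> ({x\<in>space M. W N x \<le> real L} \<inter> {x\<in>space M. \<forall>n. \<exists>j\<ge>n. 1 / real (Suc i) \<le> W j x})"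
      using H by blast
    define L where "L = nat \<lceil>W N x\<rceil>"
    have WL: "W N x \<le> real L" by (simp add: L_def real_nat_ceiling_ge)
    have ev: "\<exists>n. \<forall>j\<ge>n. W j x < 1 / real (Suc i)" for i
    proof -
      have "\<not> (\<forall>n. \<exists>j\<ge>n. 1 / real (Suc i) \<le> W j x)" using nb[of L i] WL sp by auto
      then obtain n where "\<forall>j\<ge>n. \<not> 1 / real (Suc i) \<le> W j x" by blast
      then have "\<forall>j\<ge>n. W j x < 1 / real (Suc i)" by (simp add: not_le)
      then show ?thesis by blast
    qed
    have Wlim: "(\<lambda>n. W n x) \<longlonglongrightarrow> 0"
    proof (rule LIMSEQ_I)
      fix r :: real assume r: "r > 0"
      obtain i where i: "inverse (real (Suc i)) < r" using reals_Archimedean[OF r] by blast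
      obtain n where n: "\<forall>j\<ge>n. W j x < 1 / real (Suc i)" using ev by blast
      show "\<exists>no. \<forall>n\<ge>no. norm (W n x - 0) < r"
      proof (intro exI allI impI)
        fix j assume "j \<ge> n"
        then have "W j x < 1 / real (Suc i)" using n by blast
        then show "norm (W j x - 0) < r" using i W0[of j x] by (simp add: inverse_eq_divide)
      qed
    qed
    have sq: "(\<lambda>n. sqrt (W n x)) \<longlonglongrightarrow> 0" using tendsto_real_sqrt[OF Wlim] by simp
    show "(\<lambda>n. real n powr (\<eta> / 2) * infdist (z n x) {0 .. \<xi> / \<alpha>}) \<longlonglongrightarrow> 0"
    proof (rule real_tendsto_sandwich[of "\<lambda>n. 0" _ _ "\<lambda>n. sqrt (W n x)"])
      show "eventually (\<lambda>n. 0 \<le> real n powr (\<eta>/2) * infdist (z n x) {0..\<xi>/\<alpha>}) sequentially"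
        by (simp add: infdist_nonneg)
      show "eventually (\<lambda>n. real n powr (\<eta>/2) * infdist (z n x) {0..\<xi>/\<alpha>} \<le> sqrt (W n x)) sequentially"
      proof (rule always_eventually, rule allI)
        fix n
        have d: "infdist (z n x) {0..\<xi>/\<alpha>} = max 0 (z n x - c)"
          using infdist_interval[OF z_nonneg[OF sp] c0] by (simp add: c_def)
        define g where "g = real n powr (\<eta>/2) * max 0 (z n x - c)"
        have g0: "g \<ge> 0" by (simp add: g_def)
        have pp: "(real n powr (\<eta>/2))\<^sup>2 = real n powr \<eta>"
          by (simp add: power2_eq_square powr_add[symmetric])
        have "g\<^sup>2 = real n powr \<eta> * V n x" unfolding g_def V_def
          by (simp add: power_mult_distrib pp)
        also have "\<dots> \<le> W n x" unfolding W_def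
          using V0[of n x] eta_pos by (intro mult_right_mono powr_mono2) auto
        finally have "sqrt (g\<^sup>2) \<le> sqrt (W n x)" by (rule real_sqrt_le_mono)
        then show "real n powr (\<eta>/2) * infdist (z n x) {0..\<xi>/\<alpha>} \<le> sqrt (W n x)"
          using g0 by (simp add: d g_def)
      qed
      show "(\<lambda>n. 0::real) \<longlonglongrightarrow> 0" by simp
      show "(\<lambda>n. sqrt (W n x)) \<longlonglongrightarrow> 0" by (rule sq)
    qed
  qed
qed

end
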